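(* In $NOM$, writing $\phi\vee\psi$ for $\neg(\neg\phi\wedge\neg\psi)$, the following rules are derivable for all finite sequences $\Gamma$ and formulas $\phi,\psi,\chi$: from $\Gamma\vdash\phi$ infer $\Gamma\vdash\phi\vee\psi$; from $\Gamma\vdash\psi$ infer $\Gamma\vdash\phi\vee\psi$; and from the five premises $\Gamma\vdash\phi\vee\psi$, $\Gamma,\phi\vdash\chi$, $\Gamma,\psi\vdash\chi$, $\Gamma,\chi,\phi\vdash\chi$, $\Gamma,\chi,\psi\vdash\chi$ infer $\Gamma\vdash\chi$.
   Context: The propositional deductive system $NOM$: formulas are built from propositional letters using $\wedge$, $\rightarrow$, $\neg$. Sequents are $\phi_1,\ldots,\phi_n\vdash\psi$ ($n\ge0$) with antecedent a finite ordered sequence. With $\Gamma$ a finite possibly empty sequence of formulas and $\phi,\psi,\chi$ formulas, the rules of $NOM$ are: (assumption) $\Gamma,\phi\vdash\phi$; (cut) $\Gamma\vdash\phi$, $\Gamma,\phi\vdash\psi$ $\Rightarrow$ $\Gamma\vdash\psi$; (paste) $\Gamma\vdash\phi$, $\Gamma\vdash\psi$ $\Rightarrow$ $\Gamma,\phi\vdash\psi$; (compatible exchange) $\Gamma,\phi,\psi\vdash\phi$, $\Gamma,\phi,\psi\vdash\chi$, $\Gamma,\psi,\phi\vdash\psi$ $\Rightarrow$ $\Gamma,\psi,\phi\vdash\chi$; ($\wedge$-intro) $\Gamma\vdash\phi$, $\Gamma\vdash\psi$ $\Rightarrow$ $\Gamma\vdash\phi\wedge\psi$; ($\wedge$-elim)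 $\Gamma\vdash\phi\wedge\psi$ $\Rightarrow$ $\Gamma\vdash\phi$ and $\Rightarrow$ $\Gamma\vdash\psi$; ($\rightarrow$-intro) $\Gamma,\phi\vdash\psi$ $\Rightarrow$ $\Gamma\vdash\phi\rightarrow\psi$; ($\rightarrow$-elim) $\Gamma\vdash\phi\rightarrow\psi$ $\Rightarrow$ $\Gamma,\phi\vdash\psi$; (excluded middle) $\Gamma,\phi\vdash\psi$, $\Gamma,\neg\phi\vdash\psi$ $\Rightarrow$ $\Gamma\vdash\psi$; (explosion) $\Gamma\vdash\neg\phi$ $\Rightarrow$ $\Gamma,\phi\vdash\psi$. A rule schema is derivable if in every instance its conclusion can be derived from its premises using these rules. *)

theory Defs
  imports Main
begin

datatype 'a form = Atom 'a | Conj "'a form" "'a form" | Imp "'a form" "'a form" | Neg "'a form"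

type_synonym 'a sequent = "'a form list \<times> 'a form"

text \<open>Antecedents are lists; "Gamma, phi" is written Gamma @ [phi].
  derivFrom H s: sequent s is derivable in NOM using the sequents in H as extra premises.\<close>

inductive derivFrom :: "'a sequent set \<Rightarrow> 'a sequent \<Rightarrow> bool" for H where
  hyp: "s \<in> H \<Longrightarrow> derivFrom H s"
| assumption: "derivFrom H (G @ [p], p)"
| cut: "derivFrom H (G, p) \<Longrightarrow> derivFrom H (G @ [p], q) \<Longrightarrow> derivFrom H (G, q)"
| paste: "derivFrom H (G, p) \<Longrightarrow> derivFrom H (G, q) \<Longrightarrow> derivFrom H (G @ [p], q)"
| compat_exchange: "derivFrom H (G @ [p, q], p) \<Longrightarrow> derivFrom H (G @ [p, q], r)
     \<Longrightarrow> derivFrom H (G @ [q, p], q) \<Longrightarrow> derivFrom H (G @ [q, p], r)"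
| conjI: "derivFrom H (G, p) \<Longrightarrow> derivFrom H (G, q) \<Longrightarrow> derivFrom H (G, Conj p q)"
| conjE1: "derivFrom H (G, Conj p q) \<Longrightarrow> derivFrom H (G, p)"
| conjE2: "derivFrom H (G, Conj p q) \<Longrightarrow> derivFrom H (G, q)"
| impI: "derivFrom H (G @ [p], q) \<Longrightarrow> derivFrom H (G, Imp p q)"
| impE: "derivFrom H (G, Imp p q) \<Longrightarrow> derivFrom H (G @ [p], q)"
| excluded_middle: "derivFrom H (G @ [p], q) \<Longrightarrow> derivFrom H (G @ [Neg p], q) \<Longrightarrow> derivFrom H (G, q)"
| explosion: "derivFrom H (G, Neg p) \<Longrightarrow> derivFrom H (G @ [p], q)"

definition derivable_rule :: "'a sequent list \<Rightarrow> 'a sequent \<Rightarrow> bool" where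
  "derivable_rule prems concl \<longleftrightarrow> derivFrom (set prems) concl"

definition Disj :: "'a form \<Rightarrow> 'a form \<Rightarrow> 'a form" where
  "Disj p q = Neg (Conj (Neg p) (Neg q))"

end

theory Submission
  imports Defs
begin

lemma snoc2: "(G @ [a]) @ [b] = G @ [a, b]" by simp

lemma dn_intro: "derivFrom H (G @ [p], Neg (Neg p))"
proof -
  have e1: "derivFrom H ((G @ [Neg p]) @ [p], Neg (Neg p))"
    by (rule derivFrom.explosion) (rule derivFrom.assumption)
  have a1: "derivFrom H (G @ [Neg p], Imp p (Neg (Neg p)))"
    using e1 by (rule derivFrom.impI)
  have b1: "derivFrom H ((G @ [Neg (Neg p)]) @ [p], p)"
    by (rule derivFrom.assumption)
  have b2: "derivFrom H ((G @ [Neg (Neg p)]) @ [Neg p], p)"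
    by (rule derivFrom.explosion) (rule derivFrom.assumption)
  have a2: "derivFrom H (G @ [Neg (Neg p)], p)"
    using b1 b2 by (rule derivFrom.excluded_middle)
  have a3: "derivFrom H ((G @ [Neg (Neg p)]) @ [p], Neg (Neg p))"
    using a2 derivFrom.assumption by (rule derivFrom.paste)
  have a4: "derivFrom H (G @ [Neg (Neg p)], Imp p (Neg (Neg p)))"
    using a3 by (rule derivFrom.impI)
  have "derivFrom H (G, Imp p (Neg (Neg p)))"
    using a1 a4 by (rule derivFrom.excluded_middle)
  then show ?thesis by (rule derivFrom.impE)
qed

lemma dnI: "derivFrom H (G, p) \<Longrightarrow> derivFrom H (G, Neg (Neg p))"
  by (rule derivFrom.cut, assumption, rule dn_intro)

lemma bot_neg: "derivFrom H (G, p) \<Longrightarrow> derivFrom H (G @ [Neg p], z)"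
  by (rule derivFrom.explosion, erule dnI)

lemma lemK:
  assumes na: "derivFrom H (G, Neg a)" and ba: "derivFrom H (G @ [b], a)"
  shows "derivFrom H (G @ [b], z)"
proof -
  have ab: "derivFrom H (G @ [a], b)" using na by (rule derivFrom.explosion)
  have az: "derivFrom H (G @ [a], z)" using na by (rule derivFrom.explosion)
  have p1: "derivFrom H (G @ [a, b], a)"
    using derivFrom.paste[OF ab derivFrom.assumption] by simp
  have p2: "derivFrom H (G @ [a, b], z)"
    using derivFrom.paste[OF ab az] by simp
  have p3: "derivFrom H (G @ [b, a], b)"
    using derivFrom.paste[OF ba derivFrom.assumption] by simp
  have "derivFrom H (G @ [b, a], z)"
    using p1 p2 p3 by (rule derivFrom.compat_exchange)
  then have "derivFrom H ((G @ [b]) @ [a], z)" by simp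
  with ba show ?thesis by (rule derivFrom.cut)
qed

lemma recip:
  assumes ab: "derivFrom H (G @ [a], b)" and ba: "derivFrom H (G @ [b], a)"
    and bc: "derivFrom H (G @ [b], c)"
  shows "derivFrom H (G @ [a], c)"
proof -
  have p1: "derivFrom H (G @ [b, a], b)"
    using derivFrom.paste[OF ba derivFrom.assumption] by simp
  have p2: "derivFrom H (G @ [b, a], c)"
    using derivFrom.paste[OF ba bc] by simp
  have p3: "derivFrom H (G @ [a, b], a)"
    using derivFrom.paste[OF ab derivFrom.assumption] by simp
  have "derivFrom H (G @ [a, b], c)"
    using p1 p2 p3 by (rule derivFrom.compat_exchange)
  then have "derivFrom H ((G @ [a]) @ [b], c)" by simp
  with ab show ?thesis by (rule derivFrom.cut)
qed

lemma P1: "derivFrom H (G @ [Neg (Conj a b), b], Neg (Conj a b))"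
proof -
  let ?s = "Conj a b"
  define G' where "G' = G @ [Neg ?s]"
  have g: "derivFrom H (G', Neg ?s)" unfolding G'_def by (rule derivFrom.assumption)
  have x1: "derivFrom H (G' @ [?s], b)" using g by (rule derivFrom.explosion)
  have x2: "derivFrom H (G' @ [?s], Neg ?s)" using g by (rule derivFrom.explosion)
  have c1: "derivFrom H (G' @ [?s, b], ?s)"
    using derivFrom.paste[OF x1 derivFrom.assumption] by simp
  have c2: "derivFrom H (G' @ [?s, b], Neg ?s)"
    using derivFrom.paste[OF x1 x2] by simp
  have c3: "derivFrom H (G' @ [b, ?s], b)"
    using derivFrom.conjE2[OF derivFrom.assumption[of H "G' @ [b]" ?s]] by simp
  have e1: "derivFrom H (G' @ [b, ?s], Neg ?s)"
    using c1 c2 c3 by (rule derivFrom.compat_exchange)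
  have e2: "derivFrom H ((G' @ [b]) @ [?s], Neg ?s)" using e1 by simp
  have e3: "derivFrom H ((G' @ [b]) @ [Neg ?s], Neg ?s)" by (rule derivFrom.assumption)
  have "derivFrom H (G' @ [b], Neg ?s)" using e2 e3 by (rule derivFrom.excluded_middle)
  then show ?thesis unfolding G'_def by simp
qed

lemma negconj1: "derivFrom H (G @ [Neg a], Neg (Conj a b))"
proof -
  have k: "derivFrom H ((G @ [Neg a]) @ [Conj a b], Neg (Conj a b))"
    by (rule lemK[where a = a], rule derivFrom.assumption,
        rule derivFrom.conjE1, rule derivFrom.assumption)
  have k2: "derivFrom H ((G @ [Neg a]) @ [Neg (Conj a b)], Neg (Conj a b))"
    by (rule derivFrom.assumption)
  show ?thesis using k k2 by (rule derivFrom.excluded_middle)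
qed

lemma negconj2: "derivFrom H (G @ [Neg b], Neg (Conj a b))"
proof -
  have k: "derivFrom H ((G @ [Neg b]) @ [Conj a b], Neg (Conj a b))"
    by (rule lemK[where a = b], rule derivFrom.assumption,
        rule derivFrom.conjE2, rule derivFrom.assumption)
  have k2: "derivFrom H ((G @ [Neg b]) @ [Neg (Conj a b)], Neg (Conj a b))"
    by (rule derivFrom.assumption)
  show ?thesis using k k2 by (rule derivFrom.excluded_middle)
qed

lemma lemS:
  assumes h: "derivFrom H (G, h)" and rh: "derivFrom H (G @ [r], h)"
  shows "derivFrom H (G @ [Neg r], h)"
proof -
  let ?s = "Conj h r"
  have rs: "derivFrom H (G @ [r], ?s)" using rh derivFrom.assumption by (rule derivFrom.conjI)
  have rns: "derivFrom H ((G @ [r]) @ [Neg ?s], z)" for z using rs by (rule bot_neg)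
  have q1: "derivFrom H (G @ [r, Neg ?s], r)" using rns[of r] by simp
  have q2: "derivFrom H (G @ [r, Neg ?s], Neg r)" using rns[of "Neg r"] by simp
  have q3: "derivFrom H (G @ [Neg ?s, r], Neg ?s)" using P1[of H G h r] by simp
  have q4: "derivFrom H (G @ [Neg ?s, r], Neg r)"
    using q1 q2 q3 by (rule derivFrom.compat_exchange)
  have nsnr: "derivFrom H (G @ [Neg ?s], Neg r)"
    using q4[unfolded snoc2[symmetric]] derivFrom.assumption by (rule derivFrom.excluded_middle)
  have nh: "derivFrom H ((G @ [Neg h]) @ [Neg ?s], z)" for z
    by (rule derivFrom.impE, rule bot_neg, rule h)
  have w1: "derivFrom H (G @ [Neg h, Neg ?s], Neg h)" using nh[of "Neg h"] by simp
  have w2: "derivFrom H (G @ [Neg h, Neg ?s], h)" using nh[of h] by simp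
  have w3: "derivFrom H (G @ [Neg ?s, Neg h], Neg ?s)" using negconj1[of H "G @ [Neg ?s]" h r] by simp
  have w4: "derivFrom H (G @ [Neg ?s, Neg h], h)"
    using w1 w2 w3 by (rule derivFrom.compat_exchange)
  have nsh: "derivFrom H (G @ [Neg ?s], h)"
    using derivFrom.assumption w4[unfolded snoc2[symmetric]] by (rule derivFrom.excluded_middle)
  have nrns: "derivFrom H (G @ [Neg r], Neg ?s)" by (rule negconj2)
  show ?thesis using nrns nsnr nsh by (rule recip)
qed

lemma contra:
  assumes pr: "derivFrom H (G @ [p], r)" and rpr: "derivFrom H (G @ [r, p], r)"
  shows "derivFrom H (G @ [Neg r], Neg p)"
proof -
  have i1: "derivFrom H (G, Imp p r)" using pr by (rule derivFrom.impI)
  have i2: "derivFrom H (G @ [r], Imp p r)" using rpr by (intro derivFrom.impI) simp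
  have i3: "derivFrom H (G @ [Neg r], Imp p r)" using i1 i2 by (rule lemS)
  have i4: "derivFrom H ((G @ [Neg r]) @ [p], r)" using i3 by (rule derivFrom.impE)
  have i5: "derivFrom H ((G @ [Neg r]) @ [p], Neg p)"
    by (rule lemK[OF derivFrom.assumption i4])
  show ?thesis using i5 derivFrom.assumption by (rule derivFrom.excluded_middle)
qed

theorem corollary4p6:
  fixes G :: "'a form list" and p q r :: "'a form"
  shows "derivable_rule [(G, p)] (G, Disj p q)
       \<and> derivable_rule [(G, q)] (G, Disj p q)
       \<and> derivable_rule [(G, Disj p q), (G @ [p], r), (G @ [q], r), (G @ [r, p], r), (G @ [r, q], r)] (G, r)"
proof (intro HOL.conjI)
  let ?c = "Conj (Neg p) (Neg q)"
  show "derivable_rule [(G, p)] (G, Disj p q)"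
    unfolding derivable_rule_def Disj_def
  proof -
    let ?H = "set [(G, p)]"
    have hp: "derivFrom ?H (G, p)" by (rule derivFrom.hyp) simp
    have k: "derivFrom ?H (G @ [?c], Neg ?c)"
      by (rule lemK[OF dnI[OF hp]], rule derivFrom.conjE1, rule derivFrom.assumption)
    show "derivFrom ?H (G, Neg ?c)" using k derivFrom.assumption by (rule derivFrom.excluded_middle)
  qed
  show "derivable_rule [(G, q)] (G, Disj p q)"
    unfolding derivable_rule_def Disj_def
  proof -
    let ?H = "set [(G, q)]"
    have hq: "derivFrom ?H (G, q)" by (rule derivFrom.hyp) simp
    have k: "derivFrom ?H (G @ [?c], Neg ?c)"
      by (rule lemK[OF dnI[OF hq]], rule derivFrom.conjE2, rule derivFrom.assumption)
    show "derivFrom ?H (G, Neg ?c)" using k derivFrom.assumption by (rule derivFrom.excluded_middle)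
  qed
  show "derivable_rule [(G, Disj p q), (G @ [p], r), (G @ [q], r), (G @ [r, p], r), (G @ [r, q], r)] (G, r)"
    unfolding derivable_rule_def
  proof -
    let ?H = "set [(G, Disj p q), (G @ [p], r), (G @ [q], r), (G @ [r, p], r), (G @ [r, q], r)]"
    have h0: "derivFrom ?H (G, Neg ?c)" by (rule derivFrom.hyp) (simp add: Disj_def)
    have h1: "derivFrom ?H (G @ [p], r)" by (rule derivFrom.hyp) simp
    have h2: "derivFrom ?H (G @ [q], r)" by (rule derivFrom.hyp) simp
    have h3: "derivFrom ?H (G @ [r, p], r)" by (rule derivFrom.hyp) simp
    have h4: "derivFrom ?H (G @ [r, q], r)" by (rule derivFrom.hyp) simp
    have np: "derivFrom ?H (G @ [Neg r], Neg p)" using h1 h3 by (rule contra)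
    have nq: "derivFrom ?H (G @ [Neg r], Neg q)" using h2 h4 by (rule contra)
    have nc: "derivFrom ?H (G @ [Neg r], ?c)" using np nq by (rule derivFrom.conjI)
    have nrr: "derivFrom ?H (G @ [Neg r], r)" using h0 nc by (rule lemK)
    show "derivFrom ?H (G, r)" using derivFrom.assumption nrr by (rule derivFrom.excluded_middle)
  qed
qed

end
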